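(* Let $\theta>0$, $h>0$ and $\mu=\frac12(\delta_{-1}+\delta_{+1})$. For $r\ge0$ and $\Psi\in[0,2\pi)$ let \[ q_{r,\Psi}(x,\eta)=[Z_{r,\Psi}(\eta)]^{-1}\exp\{2\theta r\cos(\Psi-x)+2h\eta\cos x\},\qquad Z_{r,\Psi}(\eta)=\int_0^{2\pi}\exp\{2\theta r\cos(\Psi-x)+2h\eta\cos x\}\,dx, \] and consider the self-consistency relation \[ r e^{i\Psi}=\int_{\{-1,+1\}}\int_0^{2\pi}e^{ix}\,q_{r,\Psi}(x,\eta)\,dx\,\mu(d\eta). \] This relation admits solutions $(r_+,\Psi_+)$ with $r_+>0$ if and only if $\Psi_+\in\{0,\frac{\pi}{2},\pi,\frac{3\pi}{2}\}$. Moreover, $r=r_+$ has to satisfy \[ r=\begin{cases}\dfrac12\left[\dfrac{I_1(2(h+\theta r))}{I_0(2(h+\theta r))}-\dfrac{I_1(2(h-\theta r))}{I_0(2(h-\theta r))}\right] & \text{if } \Psi_+\in\{0,\pi\},\\[3mm] \dfrac{\theta r}{\sqrt{h^2+\theta^2r^2}}\,\dfrac{I_1\big(2\sqrt{h^2+\theta^2r^2}\big)}{I_0\big(2\sqrt{h^2+\theta^2r^2}\big)} & \text{if } \Psi_+\in\{\frac{\pi}{2},\frac{3\pi}{2}\},\end{cases} \] where $I_v(y)=\frac{1}{2\pi}\int_0^{2\pi}\cos(v\alpha)\exp\{y\cos\alpha\}\,d\alpha$ denotes the modified Bessel function of the first kind of order $v$.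
   Context: $\theta>0$ is the coupling strength, $h>0$ the field intensity, $\mu$ the uniform law on $\{-1,+1\}$ of the random field. Solutions $(r,\Psi)$ with $r>0$ are called ferromagnetic. *)

theory Defs
  imports "HOL-Analysis.Analysis"
begin

definition besselI :: "real \<Rightarrow> real \<Rightarrow> real" where
  "besselI v y = (1 / (2 * pi)) * integral {0..2*pi} (\<lambda>a. cos (v * a) * exp (y * cos a))"

definition weight :: "real \<Rightarrow> real \<Rightarrow> real \<Rightarrow> real \<Rightarrow> real \<Rightarrow> real \<Rightarrow> real" where
  "weight \<theta> h r \<Psi> x \<eta> = exp (2 * \<theta> * r * cos (\<Psi> - x) + 2 * h * \<eta> * cos x)"

definition Zpart :: "real \<Rightarrow> real \<Rightarrow> real \<Rightarrow> real \<Rightarrow> real \<Rightarrow> real" where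
  "Zpart \<theta> h r \<Psi> \<eta> = integral {0..2*pi} (\<lambda>x. weight \<theta> h r \<Psi> x \<eta>)"

definition qdens :: "real \<Rightarrow> real \<Rightarrow> real \<Rightarrow> real \<Rightarrow> real \<Rightarrow> real \<Rightarrow> real" where
  "qdens \<theta> h r \<Psi> x \<eta> = weight \<theta> h r \<Psi> x \<eta> / Zpart \<theta> h r \<Psi> \<eta>"

(* Self-consistency relation  r e^{i Psi} = int int e^{ix} q(x,eta) dx mu(d eta),
   with mu = (delta_{-1} + delta_{+1})/2, so the mu-integral is the average over eta = -1, +1. *)
definition self_consistent :: "real \<Rightarrow> real \<Rightarrow> real \<Rightarrow> real \<Rightarrow> bool" where
  "self_consistent \<theta> h r \<Psi> \<longleftrightarrow>
     complex_of_real r * cis \<Psi> =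
       (1/2) * (\<Sum>\<eta>\<in>{-1, 1::real}.
                  integral {0..2*pi} (\<lambda>x. cis x * complex_of_real (qdens \<theta> h r \<Psi> x \<eta>)))"

end

theory Submission
  imports Defs
begin


lemma shift_pos:
  fixes g :: "real \<Rightarrow> real"
  assumes cg: "continuous_on UNIV g" and per: "\<And>x. g (x + 2*pi) = g x"
    and t: "0 \<le> t" "t \<le> 2*pi"
  shows "integral {0..2*pi} (\<lambda>x. g (x + t)) = integral {0..2*pi} g"
proof -
  have int: "\<And>a b. g integrable_on {a..b}"
    by (rule integrable_continuous_interval) (rule continuous_on_subset[OF cg], simp)
  have 1: "integral {0..2*pi} (\<lambda>x. g (x + t)) = integral {t..2*pi+t} g"
    using integral_shift_real_ivl[where a=t and b="2*pi+t" and c=t and f=g] by simp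
  have 2: "integral {t..2*pi+t} g = integral {t..2*pi} g + integral {2*pi..2*pi+t} g"
    using Henstock_Kurzweil_Integration.integral_combine[where a=t and c="2*pi" and b="2*pi+t" and f=g] t int by simp
  have 3: "integral {2*pi..2*pi+t} g = integral {0..t} g"
  proof -
    have "integral {2*pi..2*pi+t} g = integral {2*pi - 2*pi..2*pi+t-2*pi} (\<lambda>x. g (x + 2*pi))"
      using integral_shift_real_ivl[where a="2*pi" and b="2*pi+t" and c="2*pi" and f=g] by simp
    also have "\<dots> = integral {0..t} g" using per by simp
    finally show ?thesis .
  qed
  have 4: "integral {0..t} g + integral {t..2*pi} g = integral {0..2*pi} g"
    using Henstock_Kurzweil_Integration.integral_combine[where a=0 and c=t and b="2*pi" and f=g] t int by simp
  show ?thesis using 1 2 3 4 by simp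
qed

lemma shift_per:
  fixes g :: "real \<Rightarrow> real"
  assumes cg: "continuous_on UNIV g" and per: "\<And>x. g (x + 2*pi) = g x"
    and t: "\<bar>t\<bar> \<le> 2*pi"
  shows "integral {0..2*pi} (\<lambda>x. g (x + t)) = integral {0..2*pi} g"
proof (cases "t \<ge> 0")
  case True thus ?thesis using shift_pos[OF cg per] t by simp
next
  case False
  define f where "f x = g (x + t)" for x
  have cf: "continuous_on UNIV f" unfolding f_def
    by (intro continuous_on_compose2[OF cg] continuous_intros) auto
  have pf: "f (x + 2*pi) = f x" for x unfolding f_def using per[of "x+t"] by (simp add: algebra_simps)
  have "integral {0..2*pi} (\<lambda>x. f (x + (-t))) = integral {0..2*pi} f"
    using shift_pos[OF cf pf, of "-t"] t False by simp
  thus ?thesis unfolding f_def by simp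
qed



definition EE :: "real \<Rightarrow> real \<Rightarrow> real \<Rightarrow> real" where
  "EE A B x = exp (A * cos x + B * sin x)"
definition Zf where "Zf A B = integral {0..2*pi} (EE A B)"
definition Cf where "Cf A B = integral {0..2*pi} (\<lambda>x. cos x * EE A B x)"
definition Sf where "Sf A B = integral {0..2*pi} (\<lambda>x. sin x * EE A B x)"


lemma cont_EE[continuous_intros]: "continuous_on S (EE A B)"
  unfolding EE_def by (intro continuous_intros)

lemma cont_EE2[continuous_intros]: assumes "continuous_on S f" shows "continuous_on S (\<lambda>x. EE A B (f x))"
  using continuous_on_compose[OF assms cont_EE[of "f ` S" A B]] by (simp add: o_def)

lemma EE_per: "EE A B (x + 2*pi) = EE A B x"
  unfolding EE_def by simp

lemma intg: fixes f :: "real \<Rightarrow> real" assumes "continuous_on UNIV f" shows "f integrable_on {a..b::real}"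
proof -
  have "continuous_on {a..b} f" using continuous_on_subset[OF assms] by simp
  thus ?thesis by (rule integrable_continuous_real)
qed

lemma per_ftc:
  fixes F f :: "real \<Rightarrow> real"
  assumes "\<And>x. (F has_real_derivative f x) (at x)" and "F (2*pi) = F 0"
  shows "(f has_integral 0) {0..2*pi}"
proof -
  have "(f has_integral (F (2*pi) - F 0)) {0..2*pi}"
    apply (rule fundamental_theorem_of_calculus)
     apply simp
    using assms(1) has_field_derivative_at_within has_real_derivative_iff_has_vector_derivative by blast
  thus ?thesis using assms(2) by simp
qed

lemma Sf_R0: assumes "R \<noteq> 0" shows "Sf R 0 = 0"
proof -
  have h: "((\<lambda>x. R * (sin x * EE R 0 x)) has_integral 0) {0..2*pi}"
  proof (rule per_ftc[where F="\<lambda>x. - EE R 0 x"])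
    fix x
    show "((\<lambda>x. - EE R 0 x) has_real_derivative R * (sin x * EE R 0 x)) (at x)"
      unfolding EE_def by (rule derivative_eq_intros refl | simp)+
  qed (simp add: EE_def)
  hence "R * Sf R 0 = 0"
  proof -
    have "(\<lambda>x. sin x * EE R 0 x) integrable_on {0..2*pi}" by (intro intg continuous_intros)
    hence "R * Sf R 0 = integral {0..2*pi} (\<lambda>x. R * (sin x * EE R 0 x))"
      unfolding Sf_def by (rule integral_mult)
    thus ?thesis using integral_unique[OF h] by auto
  qed
  thus ?thesis using assms by simp
qed

lemma Zf_pos: "Zf A B > 0"
proof -
  have "integral {0..2*pi} (EE A B) \<noteq> 0"
  proof -
    have c: "continuous_on {0..2*pi} (EE A B)" by (rule cont_EE)
    show ?thesis using integral_eq_0_iff[where a=0 and b="2*pi" and f="EE A B", OF c]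
      by (auto simp: EE_def)
  qed
  moreover have "integral {0..2*pi} (EE A B) \<ge> 0"
    by (rule integral_nonneg) (auto intro!: intg continuous_intros simp: EE_def)
  ultimately show ?thesis unfolding Zf_def by linarith
qed

lemma Cf00: "Cf 0 0 = 0"
proof -
  have h: "(cos has_integral 0) {0..2*pi}"
    by (rule per_ftc[where F="sin"]) (rule derivative_eq_intros refl | simp)+
  show ?thesis unfolding Cf_def EE_def using integral_unique[OF h] by simp
qed

lemma Sf00: "Sf 0 0 = 0"
proof -
  have h: "(sin has_integral 0) {0..2*pi}"
    by (rule per_ftc[where F="\<lambda>x. - cos x"]) (rule derivative_eq_intros refl | simp)+
  show ?thesis unfolding Sf_def EE_def using integral_unique[OF h] by simp
qed



lemma int_lin2:
  fixes f g :: "real \<Rightarrow> real"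
  assumes "continuous_on UNIV f" "continuous_on UNIV g"
  shows "integral {0..2*pi} (\<lambda>x. a * f x + b * g x) = a * integral {0..2*pi} f + b * integral {0..2*pi} g"
proof -
  have i1: "f integrable_on {0..2*pi}" "g integrable_on {0..2*pi}" using assms by (auto intro: intg)
  have "integral {0..2*pi} (\<lambda>x. a * f x + b * g x) = integral {0..2*pi} (\<lambda>x. a * f x) + integral {0..2*pi} (\<lambda>x. b * g x)"
    by (rule integral_add; rule intg; intro continuous_intros assms)
  also have "\<dots> = a * integral {0..2*pi} f + b * integral {0..2*pi} g"
    using integral_mult[OF i1(1), of a] integral_mult[OF i1(2), of b] by simp
  finally show ?thesis .
qed

lemma rot:
  fixes A B :: real
  defines "R \<equiv> sqrt (A^2 + B^2)"
  shows "Zf A B = Zf R 0 \<and> Cf A B * R = A * Cf R 0 \<and> Sf A B * R = B * Cf R 0"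
proof (cases "R = 0")
  case True
  hence "A^2 + B^2 = 0" unfolding R_def by simp
  hence "A = 0 \<and> B = 0" by (simp add: sum_power2_eq_zero_iff)
  thus ?thesis using True by simp
next
  case False
  have "R \<ge> 0" unfolding R_def by simp
  hence Rpos: "R > 0" using False by simp
  define z where "z = Complex A B"
  define \<phi> where "\<phi> = Arg z"
  have cz: "cmod z = R" unfolding z_def R_def by (simp add: cmod_def)
  have zz: "z = rcis R \<phi>" using rcis_cmod_Arg[of z] cz \<phi>_def by simp
  have AB: "A = R * cos \<phi>" "B = R * sin \<phi>"
    using arg_cong[OF zz, of Re] arg_cong[OF zz, of Im] unfolding z_def by auto
  have phb: "\<bar>-\<phi>\<bar> \<le> 2*pi" using Arg_bounded[of z] unfolding \<phi>_def by auto
  have EEsh: "EE A B x = EE R 0 (x + - \<phi>)" for x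
    unfolding EE_def AB by (simp add: cos_diff algebra_simps)
  have per0: "EE R 0 (x + 2*pi) = EE R 0 x" for x by (rule EE_per)
  have Z: "Zf A B = Zf R 0"
    unfolding Zf_def EEsh using shift_per[OF cont_EE per0 phb] by simp
  define gc where "gc y = cos (y + \<phi>) * EE R 0 y" for y
  define gs where "gs y = sin (y + \<phi>) * EE R 0 y" for y
  have cgc: "continuous_on UNIV gc" unfolding gc_def by (intro continuous_intros)
  have cgs: "continuous_on UNIV gs" unfolding gs_def by (intro continuous_intros)
  have pgc: "gc (x + 2*pi) = gc x" for x
    unfolding gc_def EE_per using cos_periodic[of "x+\<phi>"] by (simp add: algebra_simps)
  have pgs: "gs (x + 2*pi) = gs x" for x
    unfolding gs_def EE_per using sin_periodic[of "x+\<phi>"] by (simp add: algebra_simps)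
  have e1: "cos x * EE A B x = gc (x + - \<phi>)" for x unfolding gc_def EEsh by simp
  have e2: "sin x * EE A B x = gs (x + - \<phi>)" for x unfolding gs_def EEsh by simp
  have gc': "gc y = cos \<phi> * (cos y * EE R 0 y) + (- sin \<phi>) * (sin y * EE R 0 y)" for y
    unfolding gc_def by (simp add: cos_add algebra_simps)
  have gs': "gs y = cos \<phi> * (sin y * EE R 0 y) + sin \<phi> * (cos y * EE R 0 y)" for y
    unfolding gs_def by (simp add: sin_add algebra_simps)
  have cc1: "continuous_on UNIV (\<lambda>y. cos y * EE R 0 y)" by (intro continuous_intros)
  have cc2: "continuous_on UNIV (\<lambda>y. sin y * EE R 0 y)" by (intro continuous_intros)
  have ic: "integral {0..2*pi} gc = cos \<phi> * Cf R 0"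
    unfolding gc' Cf_def
    using int_lin2[OF cc1 cc2, of "cos \<phi>" "- sin \<phi>"]
      Sf_R0[of R] Rpos unfolding Sf_def by simp
  have is': "integral {0..2*pi} gs = sin \<phi> * Cf R 0"
    unfolding gs' Cf_def
    using int_lin2[OF cc2 cc1, of "cos \<phi>" "sin \<phi>"]
      Sf_R0[of R] Rpos unfolding Sf_def by simp
  have C: "Cf A B = cos \<phi> * Cf R 0"
    unfolding Cf_def e1 using shift_per[OF cgc pgc phb] ic by (simp add: Cf_def)
  have S: "Sf A B = sin \<phi> * Cf R 0"
    unfolding Sf_def e2 using shift_per[OF cgs pgs phb] is' by (simp add: Cf_def)
  show ?thesis using Z C S AB by (simp add: algebra_simps)
qed



definition cont2 :: "(real \<Rightarrow> real \<Rightarrow> real) \<Rightarrow> bool" where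
  "cont2 G \<longleftrightarrow> continuous_on UNIV (\<lambda>p::real\<times>real. G (fst p) (snd p))"
definition IT :: "(real \<Rightarrow> real \<Rightarrow> real) \<Rightarrow> real" where
  "IT G = integral {0..2*pi} (\<lambda>x. integral {0..2*pi} (\<lambda>y. G x y))"

lemma cont2_slice1: assumes "cont2 G" shows "continuous_on UNIV (G c)"
proof -
  have "continuous_on UNIV (\<lambda>y. (\<lambda>p::real\<times>real. G (fst p) (snd p)) (c, y))"
    by (rule continuous_on_compose2[OF assms[unfolded cont2_def]]) (auto intro!: continuous_intros)
  thus ?thesis by simp
qed

lemma cont2_slice2: assumes "cont2 G" shows "continuous_on UNIV (\<lambda>x. G x c)"
proof -
  have "continuous_on UNIV (\<lambda>y. (\<lambda>p::real\<times>real. G (fst p) (snd p)) (y, c))"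
    by (rule continuous_on_compose2[OF assms[unfolded cont2_def]]) (auto intro!: continuous_intros)
  thus ?thesis by simp
qed

lemma cont2_inner: assumes "cont2 G" shows "continuous_on UNIV (\<lambda>x. integral {0..2*pi} (G x))"
proof -
  have "continuous_on (UNIV \<times> cbox 0 (2*pi)) (\<lambda>(x, t). G x t)"
    using continuous_on_subset[OF assms[unfolded cont2_def]] by (simp add: case_prod_beta')
  from integral_continuous_on_param[OF this] show ?thesis by simp
qed

lemma IT_swap: assumes "cont2 G" shows "IT G = IT (\<lambda>x y. G y x)"
proof -
  have "continuous_on (cbox (0,0) (2*pi,2*pi)) (\<lambda>(x,y). G x y)"
    using continuous_on_subset[OF assms[unfolded cont2_def]] by (simp add: case_prod_beta')
  from integral_swap_continuous[OF this] show ?thesis unfolding IT_def by simp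
qed

lemma IT_lin:
  assumes "cont2 G" "cont2 H"
  shows "IT (\<lambda>x y. a * G x y + b * H x y) = a * IT G + b * IT H"
proof -
  have "IT (\<lambda>x y. a * G x y + b * H x y) =
     integral {0..2*pi} (\<lambda>x. a * integral {0..2*pi} (G x) + b * integral {0..2*pi} (H x))"
    unfolding IT_def using int_lin2[OF cont2_slice1[OF assms(1)] cont2_slice1[OF assms(2)]] by simp
  also have "\<dots> = a * IT G + b * IT H"
    unfolding IT_def using int_lin2[OF cont2_inner[OF assms(1)] cont2_inner[OF assms(2)]] by simp
  finally show ?thesis .
qed

lemma IT_prod:
  assumes "continuous_on UNIV f" "continuous_on UNIV g"
  shows "IT (\<lambda>x y. f x * g y) = integral {0..2*pi} f * integral {0..2*pi} g"
proof -
  have ig: "g integrable_on {0..2*pi}" "f integrable_on {0..2*pi}" using assms by (auto intro: intg)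
  have "IT (\<lambda>x y. f x * g y) = integral {0..2*pi} (\<lambda>x. integral {0..2*pi} g * f x)"
    unfolding IT_def using integral_mult[OF ig(1)] by (simp add: mult.commute)
  also have "\<dots> = integral {0..2*pi} g * integral {0..2*pi} f"
    using integral_mult[OF ig(2)] by simp
  finally show ?thesis by simp
qed

lemma IT_shift:
  assumes c: "cont2 G" and p1: "\<And>x y. G (x + 2*pi) y = G x y" and p2: "\<And>x y. G x (y + 2*pi) = G x y"
  shows "IT (\<lambda>x y. G (x + pi) (y + pi)) = IT G"
proof -
  have c1: "cont2 (\<lambda>x y. G (x + pi) y)"
  proof -
    have "continuous_on UNIV (\<lambda>p::real\<times>real. (\<lambda>p. G (fst p) (snd p)) (fst p + pi, snd p))"
      by (rule continuous_on_compose2[OF c[unfolded cont2_def]]) (auto intro!: continuous_intros)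
    thus ?thesis unfolding cont2_def by simp
  qed
  have c2: "cont2 (\<lambda>x y. G y x)"
  proof -
    have "continuous_on UNIV (\<lambda>p::real\<times>real. (\<lambda>p. G (fst p) (snd p)) (snd p, fst p))"
      by (rule continuous_on_compose2[OF c[unfolded cont2_def]]) (auto intro!: continuous_intros)
    thus ?thesis unfolding cont2_def by simp
  qed
  have pb: "\<bar>pi\<bar> \<le> 2*pi" by simp
  have "IT (\<lambda>x y. G (x + pi) (y + pi)) = IT (\<lambda>x y. G (x + pi) y)"
    unfolding IT_def
    using shift_per[OF cont2_slice1[OF c] p2 pb] by simp
  also have "\<dots> = IT (\<lambda>x y. G (y + pi) x)" using IT_swap[OF c1] by simp
  also have "\<dots> = IT (\<lambda>x y. G y x)"
    unfolding IT_def
    using shift_per[OF cont2_slice2[OF c] p1 pb] by simp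
  also have "\<dots> = IT G" using IT_swap[OF c2] by simp
  finally show ?thesis .
qed

lemma IT_pos:
  assumes c: "cont2 G" and nn: "\<And>x y. G x y \<ge> 0" and pt: "G x0 y0 > 0"
    and x0: "0 \<le> x0" "x0 \<le> 2*pi" and y0: "0 \<le> y0" "y0 \<le> 2*pi"
  shows "IT G > 0"
proof -
  have pos1: "integral {0..2*pi} (G x) \<ge> 0" for x
    by (rule integral_nonneg) (auto intro: intg cont2_slice1[OF c] nn)
  have ne1: "integral {0..2*pi} (G x0) \<noteq> 0"
  proof -
    have cc: "continuous_on {0..2*pi} (G x0)" using continuous_on_subset[OF cont2_slice1[OF c]] by simp
    show ?thesis using integral_eq_0_iff[where a=0 and b="2*pi" and f="G x0", OF cc] nn pt x0 y0 by force
  qed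
  have cc: "continuous_on {0..2*pi} (\<lambda>x. integral {0..2*pi} (G x))"
    using continuous_on_subset[OF cont2_inner[OF c]] by simp
  have "integral {0..2*pi} (\<lambda>x. integral {0..2*pi} (G x)) \<noteq> 0"
    using integral_eq_0_iff[where a=0 and b="2*pi" and f="\<lambda>x. integral {0..2*pi} (G x)", OF cc] pos1 ne1 x0
    by force
  moreover have "integral {0..2*pi} (\<lambda>x. integral {0..2*pi} (G x)) \<ge> 0"
    by (rule integral_nonneg) (auto intro: intg cont2_inner[OF c] pos1)
  ultimately show ?thesis unfolding IT_def by simp
qed



definition s2 where "s2 R = integral {0..2*pi} (\<lambda>x. (sin x)^2 * EE R 0 x)"

lemma ibp: "Cf R 0 = R * s2 R"
proof -
  have h: "((\<lambda>x. 1 * (cos x * EE R 0 x) + (-R) * ((sin x)^2 * EE R 0 x)) has_integral 0) {0..2*pi}"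
  proof (rule per_ftc[where F="\<lambda>x. sin x * EE R 0 x"])
    fix x
    show "((\<lambda>x. sin x * EE R 0 x) has_real_derivative
        1 * (cos x * EE R 0 x) + (-R) * ((sin x)^2 * EE R 0 x)) (at x)"
      unfolding EE_def by (auto intro!: derivative_eq_intros simp: power2_eq_square algebra_simps)
  qed simp
  have "integral {0..2*pi} (\<lambda>x. 1 * (cos x * EE R 0 x) + (-R) * ((sin x)^2 * EE R 0 x))
      = 1 * Cf R 0 + (-R) * s2 R"
    unfolding Cf_def s2_def by (rule int_lin2) (intro continuous_intros)+
  thus ?thesis using integral_unique[OF h] by simp
qed

definition VV :: "real \<Rightarrow> real \<Rightarrow> real \<Rightarrow> real \<Rightarrow> real" where "VV R S x y = ((sin x)^2 - (sin y)^2) * (EE R 0 x * EE S 0 y)"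
definition WW :: "real \<Rightarrow> real \<Rightarrow> real \<Rightarrow> real \<Rightarrow> real" where "WW R S x y = VV R S x y + VV R S y x"
definition QQ :: "real \<Rightarrow> real \<Rightarrow> real \<Rightarrow> real \<Rightarrow> real" where "QQ R S x y = (cos y ^2 - cos x ^2) *
   (2 * cosh (R * cos x + S * cos y) - 2 * cosh (R * cos y + S * cos x))"

lemma cVV: "cont2 (VV R S)" unfolding cont2_def VV_def by (intro continuous_intros)
lemma cWW: "cont2 (WW R S)" unfolding cont2_def WW_def VV_def by (intro continuous_intros)

lemma QQ_eq: "QQ R S x y = WW R S x y + WW R S (x + pi) (y + pi)"
  unfolding QQ_def WW_def VV_def EE_def cosh_field_def
  by (simp add: exp_add[symmetric] exp_minus sin_squared_eq field_simps)

lemma cosh_cmp: fixes u v :: real assumes "v^2 \<le> u^2" shows "cosh v \<le> cosh u"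
proof -
  have "\<bar>v\<bar> \<le> \<bar>u\<bar>" using assms abs_le_square_iff by blast
  hence "cosh \<bar>v\<bar> \<le> cosh \<bar>u\<bar>" using cosh_real_nonneg_le_iff[of "\<bar>v\<bar>" "\<bar>u\<bar>"] by simp
  thus ?thesis by simp
qed

lemma keyid: "((R::real)*a + S*b)^2 - (R*b + S*a)^2 = (S^2 - R^2) * (b^2 - a^2)"
  by (simp add: power2_eq_square algebra_simps)

lemma QQ_nn: assumes "0 \<le> R" "R \<le> S" shows "QQ R S x y \<ge> 0"
proof -
  define a where "a = cos x"
  define b where "b = cos y"
  have key: "(R*a + S*b)^2 - (R*b + S*a)^2 = (S^2 - R^2) * (b^2 - a^2)"
    by (rule keyid)
  have SR: "S^2 - R^2 \<ge> 0" using assms by (simp add: power_mono)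
  show ?thesis
  proof (cases "a^2 \<le> b^2")
    case True
    hence "(R*b + S*a)^2 \<le> (R*a + S*b)^2" using key SR
      by (smt (verit) mult_nonneg_nonneg)
    hence "cosh (R*b + S*a) \<le> cosh (R*a + S*b)" by (rule cosh_cmp)
    thus ?thesis unfolding QQ_def a_def[symmetric] b_def[symmetric] using True by simp
  next
    case False
    hence "(R*a + S*b)^2 \<le> (R*b + S*a)^2" using key SR
      by (smt (verit) mult_nonneg_nonpos)
    hence "cosh (R*a + S*b) \<le> cosh (R*b + S*a)" by (rule cosh_cmp)
    thus ?thesis unfolding QQ_def a_def[symmetric] b_def[symmetric] using False
      by (intro mult_nonpos_nonpos) auto
  qed
qed

lemma QQ_pt: assumes "0 \<le> R" "R < S" shows "QQ R S 0 (pi/2) > 0"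
proof -
  have "cosh R < cosh S" using assms cosh_real_nonneg_less_iff by simp
  thus ?thesis unfolding QQ_def by simp
qed

lemma mono_s2: assumes "0 \<le> R" "R < S" shows "s2 S * Zf R 0 < s2 R * Zf S 0"
proof -
  have c1: "continuous_on UNIV (\<lambda>x. (sin x)^2 * EE R 0 x)" by (intro continuous_intros)
  have c2: "continuous_on UNIV (\<lambda>x. (sin x)^2 * EE S 0 x)" by (intro continuous_intros)
  have P1: "IT (\<lambda>x y. (sin x)^2 * EE R 0 x * EE S 0 y) = s2 R * Zf S 0"
    using IT_prod[OF c1 cont_EE[of UNIV S 0]] unfolding s2_def Zf_def by simp
  have P2: "IT (\<lambda>x y. (sin x)^2 * EE S 0 x * EE R 0 y) = s2 S * Zf R 0"
    using IT_prod[OF c2 cont_EE[of UNIV R 0]] unfolding s2_def Zf_def by simp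
  have cP2: "cont2 (\<lambda>x y. (sin x)^2 * EE S 0 x * EE R 0 y)" unfolding cont2_def by (intro continuous_intros)
  have cP1: "cont2 (\<lambda>x y. (sin x)^2 * EE R 0 x * EE S 0 y)" unfolding cont2_def by (intro continuous_intros)
  have cP2': "cont2 (\<lambda>x y. (sin y)^2 * EE S 0 y * EE R 0 x)" unfolding cont2_def by (intro continuous_intros)
  have P2': "IT (\<lambda>x y. (sin y)^2 * EE S 0 y * EE R 0 x) = s2 S * Zf R 0"
    using IT_swap[OF cP2] P2 by simp
  have "IT (VV R S) = IT (\<lambda>x y. 1 * ((sin x)^2 * EE R 0 x * EE S 0 y) + (-1) * ((sin y)^2 * EE S 0 y * EE R 0 x))"
    unfolding VV_def by (rule arg_cong[where f=IT]) (auto simp: fun_eq_iff algebra_simps)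
  also have "\<dots> = s2 R * Zf S 0 - s2 S * Zf R 0"
    using IT_lin[OF cP1 cP2', of 1 "-1"] P1 P2' by simp
  finally have V: "IT (VV R S) = s2 R * Zf S 0 - s2 S * Zf R 0" .
  have W: "IT (WW R S) = 2 * IT (VV R S)"
  proof -
    have "IT (WW R S) = IT (\<lambda>x y. 1 * VV R S x y + 1 * VV R S y x)"
      unfolding WW_def by simp
    also have "\<dots> = IT (VV R S) + IT (\<lambda>x y. VV R S y x)"
    proof -
      have cs: "cont2 (\<lambda>x y. VV R S y x)" unfolding cont2_def VV_def by (intro continuous_intros)
      show ?thesis using IT_lin[OF cVV[of R S] cs, of 1 1] by simp
    qed
    finally show ?thesis using IT_swap[OF cVV] by simp
  qed
  have Q: "IT (QQ R S) = 2 * IT (WW R S)"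
  proof -
    have p1: "WW R S (x + 2*pi) y = WW R S x y" for x y unfolding WW_def VV_def by (simp add: EE_per)
    have p2: "WW R S x (y + 2*pi) = WW R S x y" for x y unfolding WW_def VV_def by (simp add: EE_per)
    have cs: "cont2 (\<lambda>x y. WW R S (x + pi) (y + pi))" unfolding cont2_def WW_def VV_def by (intro continuous_intros)
    have "IT (QQ R S) = IT (\<lambda>x y. 1 * WW R S x y + 1 * WW R S (x + pi) (y + pi))"
      unfolding QQ_eq by simp
    also have "\<dots> = IT (WW R S) + IT (\<lambda>x y. WW R S (x + pi) (y + pi))"
      using IT_lin[OF cWW[of R S] cs, of 1 1] by simp
    finally show ?thesis using IT_shift[OF cWW p1 p2] by simp
  qed
  have cQ: "cont2 (QQ R S)" unfolding cont2_def QQ_def by (intro continuous_intros)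
  have "IT (QQ R S) > 0"
    by (rule IT_pos[OF cQ _ QQ_pt[OF assms]]) (use QQ_nn assms in auto)
  thus ?thesis using Q W V by simp
qed



definition kk where "kk R = Cf R 0 / (R * Zf R 0)"

lemma kk_s2: "R > 0 \<Longrightarrow> kk R = s2 R / Zf R 0"
  unfolding kk_def ibp using Zf_pos[of R 0] by simp

lemma kk_mono: assumes "0 < R" "R < S" shows "kk S < kk R"
proof -
  have "s2 S * Zf R 0 < s2 R * Zf S 0" using mono_s2 assms by simp
  moreover have "Zf R 0 > 0" "Zf S 0 > 0" using Zf_pos by auto
  ultimately have "s2 S / Zf S 0 < s2 R / Zf R 0" by (simp add: divide_simps)
  thus ?thesis using kk_s2 assms by simp
qed

lemma kk_inj: assumes "0 < R" "0 < S" "kk R = kk S" shows "R = S"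
  using kk_mono[of R S] kk_mono[of S R] assms by (cases R S rule: linorder_cases) auto

lemma gen:
  fixes A B :: real
  defines "R \<equiv> sqrt (A^2 + B^2)"
  shows "Cf A B / Zf A B = A * kk R" "Sf A B / Zf A B = B * kk R"
proof -
  have rt: "Zf A B = Zf R 0" "Cf A B * R = A * Cf R 0" "Sf A B * R = B * Cf R 0"
    using rot[of A B] unfolding R_def by auto
  have Zp: "Zf R 0 > 0" using Zf_pos by simp
  have "Cf A B / Zf A B = A * kk R \<and> Sf A B / Zf A B = B * kk R"
  proof (cases "R = 0")
    case True
    hence "A^2 + B^2 = 0" unfolding R_def by simp
    hence "A = 0 \<and> B = 0" by (simp add: sum_power2_eq_zero_iff)
    thus ?thesis using Cf00 Sf00 by simp
  next
    case False
    have "Cf A B = A * Cf R 0 / R" "Sf A B = B * Cf R 0 / R" using rt False by (simp_all add: field_simps)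
    thus ?thesis using rt(1) Zp False unfolding kk_def by (simp add: field_simps)
  qed
  thus "Cf A B / Zf A B = A * kk R" "Sf A B / Zf A B = B * kk R" by auto
qed

lemma bessel1: "besselI 1 y = Cf y 0 / (2*pi)"
  unfolding besselI_def Cf_def EE_def by simp
lemma bessel0: "besselI 0 y = Zf y 0 / (2*pi)"
  unfolding besselI_def Zf_def EE_def by simp

lemma Kratio: "besselI 1 y / besselI 0 y = y * kk \<bar>y\<bar>"
  using gen(1)[of y 0] unfolding bessel1 bessel0 by simp

lemma cint:
  "((\<lambda>x. cis x * complex_of_real (EE A B x / Z)) has_integral Complex (Cf A B / Z) (Sf A B / Z)) {0..2*pi}"
proof -
  have hc: "((\<lambda>x. cos x * EE A B x) has_integral Cf A B) {0..2*pi}"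
    unfolding Cf_def by (rule integrable_integral, rule intg, intro continuous_intros)
  have hs: "((\<lambda>x. sin x * EE A B x) has_integral Sf A B) {0..2*pi}"
    unfolding Sf_def by (rule integrable_integral, rule intg, intro continuous_intros)
  have h1: "((\<lambda>x. complex_of_real (cos x * EE A B x / Z)) has_integral complex_of_real (Cf A B / Z)) {0..2*pi}"
    by (rule has_integral_of_real, rule has_integral_divide[OF hc])
  have h2: "((\<lambda>x. \<i> * complex_of_real (sin x * EE A B x / Z)) has_integral \<i> * complex_of_real (Sf A B / Z)) {0..2*pi}"
    by (rule has_integral_mult_right, rule has_integral_of_real, rule has_integral_divide[OF hs])
  note h3 = has_integral_add[OF h1 h2]
  have eq1: "complex_of_real (cos x * EE A B x / Z) + \<i> * complex_of_real (sin x * EE A B x / Z)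
      = cis x * complex_of_real (EE A B x / Z)" for x
    by (simp add: complex_eq_iff)
  have eq2: "complex_of_real (Cf A B / Z) + \<i> * complex_of_real (Sf A B / Z) = Complex (Cf A B / Z) (Sf A B / Z)"
    by (simp add: complex_eq_iff)
  show ?thesis using h3 unfolding eq1 eq2 .
qed



lemma SC:
  fixes \<theta> h r \<Psi> :: real
  defines "Ap \<equiv> 2 * \<theta> * r * cos \<Psi> + 2*h" and "Am \<equiv> 2 * \<theta> * r * cos \<Psi> - 2*h" and "B \<equiv> 2 * \<theta> * r * sin \<Psi>"
  shows "self_consistent \<theta> h r \<Psi> \<longleftrightarrow>
     (r * cos \<Psi> = (Am * kk (sqrt (Am^2 + B^2)) + Ap * kk (sqrt (Ap^2 + B^2))) / 2 \<and>
      r * sin \<Psi> = (B * kk (sqrt (Am^2 + B^2)) + B * kk (sqrt (Ap^2 + B^2))) / 2)"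
proof -
  define Ae where "Ae \<eta> = 2 * \<theta> * r * cos \<Psi> + 2*h*\<eta>" for \<eta>
  have w: "weight \<theta> h r \<Psi> x \<eta> = EE (Ae \<eta>) B x" for x \<eta>
    unfolding weight_def EE_def B_def Ae_def by (simp add: cos_diff algebra_simps)
  have Zp: "Zpart \<theta> h r \<Psi> \<eta> = Zf (Ae \<eta>) B" for \<eta>
    unfolding Zpart_def Zf_def w ..
  have I: "integral {0..2*pi} (\<lambda>x. cis x * complex_of_real (qdens \<theta> h r \<Psi> x \<eta>))
      = Complex (Ae \<eta> * kk (sqrt ((Ae \<eta>)^2 + B^2))) (B * kk (sqrt ((Ae \<eta>)^2 + B^2)))" for \<eta>
    unfolding qdens_def w Zp using integral_unique[OF cint] gen by simp
  have e1: "Ae (-1) = Am" "Ae 1 = Ap" unfolding Ae_def Am_def Ap_def by simp_all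
  have "self_consistent \<theta> h r \<Psi> \<longleftrightarrow> complex_of_real r * cis \<Psi> =
      1/2 * (Complex (Am * kk (sqrt (Am^2 + B^2))) (B * kk (sqrt (Am^2 + B^2)))
           + Complex (Ap * kk (sqrt (Ap^2 + B^2))) (B * kk (sqrt (Ap^2 + B^2))))"
    unfolding self_consistent_def I by (simp add: e1)
  also have "\<dots> \<longleftrightarrow> (r * cos \<Psi> = (Am * kk (sqrt (Am^2 + B^2)) + Ap * kk (sqrt (Ap^2 + B^2))) / 2 \<and>
      r * sin \<Psi> = (B * kk (sqrt (Am^2 + B^2)) + B * kk (sqrt (Ap^2 + B^2))) / 2)"
    by (simp add: complex_eq_iff)
  finally show ?thesis .
qed



lemma sin0: fixes \<Psi> :: real assumes "0 \<le> \<Psi>" "\<Psi> < 2*pi" "sin \<Psi> = 0" shows "\<Psi> = 0 \<or> \<Psi> = pi"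
proof (cases "\<Psi> = 0")
  case False
  hence "\<bar>\<Psi> - pi\<bar> < pi" using assms by auto
  moreover have "sin (\<Psi> - pi) = 0" using assms by (simp add: sin_diff)
  ultimately have "\<Psi> - pi = 0" using sin_zero_pi_iff by blast
  thus ?thesis by simp
qed simp

lemma trig32: "cos (3*pi/2) = 0" "sin (3*pi/2) = -1"
proof -
  have e: "3*pi/2 = pi/2 + pi" by simp
  show "cos (3*pi/2) = 0" by (subst e, subst cos_periodic_pi, simp)
  show "sin (3*pi/2) = -1" by (subst e, subst sin_periodic_pi, simp)
qed

lemma cos0: fixes \<Psi> :: real assumes "0 \<le> \<Psi>" "\<Psi> < 2*pi" "cos \<Psi> = 0" shows "\<Psi> = pi/2 \<or> \<Psi> = 3*pi/2"
proof (cases "\<Psi> < 3*pi/2")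
  case True
  hence "\<bar>\<Psi> - pi/2\<bar> < pi" using assms pi_gt_zero by auto
  moreover have "sin (\<Psi> - pi/2) = 0" using assms by (simp add: sin_diff)
  ultimately have "\<Psi> - pi/2 = 0" using sin_zero_pi_iff by blast
  thus ?thesis by simp
next
  case False
  hence "\<bar>\<Psi> - 3*pi/2\<bar> < pi" using assms pi_gt_zero by auto
  moreover have "sin (\<Psi> - 3*pi/2) = 0"
  proof -
    show ?thesis using assms by (simp add: sin_diff trig32)
  qed
  ultimately have "\<Psi> - 3*pi/2 = 0" using sin_zero_pi_iff by blast
  thus ?thesis by simp
qed

theorem proposition3:
  fixes \<theta> h r \<Psi> :: real
  assumes "\<theta> > 0" and "h > 0" and "r > 0" and "0 \<le> \<Psi>" and "\<Psi> < 2 * pi"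
  shows "self_consistent \<theta> h r \<Psi> \<longleftrightarrow>
    ((\<Psi> = 0 \<or> \<Psi> = pi) \<and>
       r = (1/2) * (besselI 1 (2 * (h + \<theta> * r)) / besselI 0 (2 * (h + \<theta> * r))
                  - besselI 1 (2 * (h - \<theta> * r)) / besselI 0 (2 * (h - \<theta> * r))))
    \<or> ((\<Psi> = pi / 2 \<or> \<Psi> = 3 * pi / 2) \<and>
       r = \<theta> * r / sqrt (h^2 + \<theta>^2 * r^2)
           * (besselI 1 (2 * sqrt (h^2 + \<theta>^2 * r^2)) / besselI 0 (2 * sqrt (h^2 + \<theta>^2 * r^2))))"
proof -
  note th = assms(1) and hp = assms(2) and rp = assms(3)
  define Ap where "Ap = 2 * \<theta> * r * cos \<Psi> + 2*h"
  define Am where "Am = 2 * \<theta> * r * cos \<Psi> - 2*h"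
  define B where "B = 2 * \<theta> * r * sin \<Psi>"
  define kp where "kp = kk (sqrt (Ap^2 + B^2))"
  define km where "km = kk (sqrt (Am^2 + B^2))"
  define \<sigma> where "\<sigma> = sqrt (h^2 + \<theta>^2 * r^2)"
  have sp: "\<sigma> > 0" unfolding \<sigma>_def using hp by (simp add: add_pos_nonneg)
  have SC': "self_consistent \<theta> h r \<Psi> \<longleftrightarrow>
     (r * cos \<Psi> = (Am * km + Ap * kp) / 2 \<and> r * sin \<Psi> = (B * km + B * kp) / 2)"
    using SC[of \<theta> h r \<Psi>] unfolding Ap_def Am_def B_def kp_def km_def by simp
  define F1 where "F1 = (r = (1/2) * (besselI 1 (2 * (h + \<theta> * r)) / besselI 0 (2 * (h + \<theta> * r))
                  - besselI 1 (2 * (h - \<theta> * r)) / besselI 0 (2 * (h - \<theta> * r))))"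
  define F2 where "F2 = (r = \<theta> * r / sqrt (h^2 + \<theta>^2 * r^2)
           * (besselI 1 (2 * sqrt (h^2 + \<theta>^2 * r^2)) / besselI 0 (2 * sqrt (h^2 + \<theta>^2 * r^2))))"
  have F1': "F1 \<longleftrightarrow> r = (h + \<theta> * r) * kk \<bar>2 * (h + \<theta> * r)\<bar> - (h - \<theta> * r) * kk \<bar>2 * (h - \<theta> * r)\<bar>"
    unfolding F1_def Kratio by (simp add: algebra_simps)
  have F2': "F2 \<longleftrightarrow> r = 2 * \<theta> * r * kk (2 * \<sigma>)"
  proof -
    have "\<bar>2 * \<sigma>\<bar> = 2 * \<sigma>" using sp by simp
    thus ?thesis unfolding F2_def Kratio \<sigma>_def[symmetric] using sp by (simp add: field_simps)
  qed
  have pi2: "pi/2 \<noteq> 0" "pi/2 \<noteq> pi" "3*pi/2 \<noteq> 0" "3*pi/2 \<noteq> pi" by simp_all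
  have goal: "?thesis \<longleftrightarrow> (self_consistent \<theta> h r \<Psi> \<longleftrightarrow>
      ((\<Psi> = 0 \<or> \<Psi> = pi) \<and> F1) \<or> ((\<Psi> = pi / 2 \<or> \<Psi> = 3 * pi / 2) \<and> F2))"
    unfolding F1_def F2_def ..
  consider "\<Psi> = 0" | "\<Psi> = pi" | "\<Psi> = pi/2" | "\<Psi> = 3*pi/2" | "sin \<Psi> \<noteq> 0" "cos \<Psi> \<noteq> 0"
    using sin0[OF assms(4,5)] cos0[OF assms(4,5)] by blast
  thus ?thesis
  proof cases
    case 1
    have e: "Ap = 2 * (h + \<theta> * r)" "Am = - (2 * (h - \<theta> * r))" "B = 0"
      unfolding Ap_def Am_def B_def 1 by simp_all
    have k: "kp = kk \<bar>2 * (h + \<theta> * r)\<bar>" "km = kk \<bar>2 * (h - \<theta> * r)\<bar>"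
      unfolding kp_def km_def e power2_minus by (simp_all add: abs_minus_commute)
    have x: "(Am * km + Ap * kp) / 2 = (h + \<theta> * r) * kp - (h - \<theta> * r) * km"
      unfolding e by (simp add: field_simps)
    have "self_consistent \<theta> h r \<Psi> \<longleftrightarrow> F1" unfolding SC' F1' x using 1 by (simp add: e k)
    moreover have "\<not> (\<Psi> = pi/2 \<or> \<Psi> = 3*pi/2)" using 1 pi2 by auto
    ultimately show ?thesis using goal 1 by blast
  next
    case 2
    have e: "Ap = 2 * (h - \<theta> * r)" "Am = - (2 * (h + \<theta> * r))" "B = 0"
      unfolding Ap_def Am_def B_def 2 by simp_all
    have k: "kp = kk \<bar>2 * (h - \<theta> * r)\<bar>" "km = kk \<bar>2 * (h + \<theta> * r)\<bar>"
      unfolding kp_def km_def e power2_minus by (simp_all add: abs_minus_commute)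
    have x: "(Am * km + Ap * kp) / 2 = (h - \<theta> * r) * kp - (h + \<theta> * r) * km"
      unfolding e by (simp add: field_simps)
    have "self_consistent \<theta> h r \<Psi> \<longleftrightarrow> F1" unfolding SC' F1' x using 2 by (auto simp: e k)
    moreover have "\<not> (\<Psi> = pi/2 \<or> \<Psi> = 3*pi/2)" using 2 pi2 by auto
    ultimately show ?thesis using goal 2 by blast
  next
    case 3
    have e: "Ap = 2 * h" "Am = - (2 * h)" "B = 2 * \<theta> * r"
      unfolding Ap_def Am_def B_def 3 by simp_all
    have s: "sqrt ((2*h)^2 + (2 * \<theta> * r)^2) = 2 * \<sigma>"
    proof -
      have "(2*h)^2 + (2 * \<theta> * r)^2 = 2^2 * (h^2 + \<theta>^2 * r^2)" by (simp add: power_mult_distrib algebra_simps)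
      hence "sqrt ((2*h)^2 + (2 * \<theta> * r)^2) = sqrt (2^2) * sqrt (h^2 + \<theta>^2 * r^2)"
        by (simp only: real_sqrt_mult)
      thus ?thesis unfolding \<sigma>_def by simp
    qed
    have k: "kp = kk (2 * \<sigma>)" "km = kk (2 * \<sigma>)"
      unfolding kp_def km_def e using s by simp_all
    have x: "(Am * km + Ap * kp) / 2 = 0" "(B * km + B * kp) / 2 = 2 * \<theta> * r * kk (2 * \<sigma>)"
      unfolding e k by (simp_all add: algebra_simps)
    have cs: "cos \<Psi> = 0" "sin \<Psi> = 1" unfolding 3 by simp_all
    have "self_consistent \<theta> h r \<Psi> \<longleftrightarrow> F2" unfolding SC' F2' x cs using rp by simp
    moreover have "\<not> (\<Psi> = 0 \<or> \<Psi> = pi)" using 3 pi2 by auto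
    ultimately show ?thesis using goal 3 by blast
  next
    case 4
    have e: "Ap = 2 * h" "Am = - (2 * h)" "B = - (2 * \<theta> * r)"
      unfolding Ap_def Am_def B_def 4 trig32 by simp_all
    have s: "sqrt ((2*h)^2 + (2 * \<theta> * r)^2) = 2 * \<sigma>"
    proof -
      have "(2*h)^2 + (2 * \<theta> * r)^2 = 2^2 * (h^2 + \<theta>^2 * r^2)" by (simp add: power_mult_distrib algebra_simps)
      hence "sqrt ((2*h)^2 + (2 * \<theta> * r)^2) = sqrt (2^2) * sqrt (h^2 + \<theta>^2 * r^2)"
        by (simp only: real_sqrt_mult)
      thus ?thesis unfolding \<sigma>_def by simp
    qed
    have k: "kp = kk (2 * \<sigma>)" "km = kk (2 * \<sigma>)"
      unfolding kp_def km_def e using s by simp_all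
    have x: "(Am * km + Ap * kp) / 2 = 0" "(B * km + B * kp) / 2 = - (2 * \<theta> * r * kk (2 * \<sigma>))"
      unfolding e k by (simp_all add: algebra_simps)
    have cs: "cos \<Psi> = 0" "sin \<Psi> = -1" unfolding 4 trig32 by simp_all
    have "self_consistent \<theta> h r \<Psi> \<longleftrightarrow> F2" unfolding SC' F2' x cs using rp by simp
    moreover have "\<not> (\<Psi> = 0 \<or> \<Psi> = pi)" using 4 pi2 by auto
    ultimately show ?thesis using goal 4 by blast
  next
    case 5
    have notv1: "\<Psi> \<noteq> 0" "\<Psi> \<noteq> pi" using 5 by auto
    have notv2: "\<Psi> \<noteq> pi/2"
    proof
      assume a: "\<Psi> = pi/2"
      have "cos \<Psi> = 0" unfolding a by simp
      thus False using 5 by simp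
    qed
    have notv3: "\<Psi> \<noteq> 3*pi/2"
    proof
      assume a: "\<Psi> = 3*pi/2"
      have "cos \<Psi> = 0" unfolding a by (rule trig32)
      thus False using 5 by simp
    qed
    note notv = notv1 notv2 notv3
    have "\<not> self_consistent \<theta> h r \<Psi>"
    proof
      assume "self_consistent \<theta> h r \<Psi>"
      hence E1: "r * cos \<Psi> = (Am * km + Ap * kp) / 2" and E2: "r * sin \<Psi> = (B * km + B * kp) / 2"
        unfolding SC' by auto
      have "r * sin \<Psi> = r * sin \<Psi> * (\<theta> * (km + kp))" using E2 unfolding B_def by (simp add: algebra_simps)
      hence t1: "\<theta> * (km + kp) = 1" using 5 rp by simp
      have "r * cos \<Psi> = r * cos \<Psi> * (\<theta> * (km + kp)) + h * (kp - km)"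
        using E1 unfolding Ap_def Am_def by (simp add: algebra_simps)
      hence "h * (kp - km) = 0" using t1 by simp
      hence kq: "kp = km" using hp by simp
      have Bn: "B \<noteq> 0" unfolding B_def using 5 th rp by simp
      have pos: "sqrt (Ap^2 + B^2) > 0" "sqrt (Am^2 + B^2) > 0" using Bn by (simp_all add: add_nonneg_pos)
      have "sqrt (Ap^2 + B^2) = sqrt (Am^2 + B^2)"
        using kk_inj[OF pos] kq unfolding kp_def km_def by simp
      hence "Ap^2 = Am^2" by simp
      hence "16 * \<theta> * r * cos \<Psi> * h = 0" unfolding Ap_def Am_def by (simp add: power2_eq_square algebra_simps)
      thus False using 5 th rp hp by simp
    qed
    thus ?thesis using goal notv by blast
  qed
qed


end
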